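(* There is a function $f$ on the natural numbers such that, for every finite group $G$, $\omega(\mathrm{EPow}(G))\leqslant f(\omega(\mathrm{Pow}(G)))$.
   Context: $\omega$ denotes clique number. $\mathrm{Pow}(G)$ is the graph on $G$ in which distinct $x,y$ are adjacent iff one is a power of the other; $\mathrm{EPow}(G)$ is the graph on $G$ in which distinct $x,y$ are adjacent iff $\langle x,y\rangle$ is cyclic. *)

theory Defs
  imports "HOL-Algebra.Elementary_Groups"
begin

definition is_clique :: "'a set \<Rightarrow> ('a \<Rightarrow> 'a \<Rightarrow> bool) \<Rightarrow> 'a set \<Rightarrow> bool" where
  "is_clique V E S \<longleftrightarrow> S \<subseteq> V \<and> (\<forall>x\<in>S. \<forall>y\<in>S. x \<noteq> y \<longrightarrow> E x y)"

definition clique_number :: "'a set \<Rightarrow> ('a \<Rightarrow> 'a \<Rightarrow> bool) \<Rightarrow> nat" where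
  "clique_number V E = Max (card ` {S. is_clique V E S})"

definition pow_adj :: "('a, 'b) monoid_scheme \<Rightarrow> 'a \<Rightarrow> 'a \<Rightarrow> bool" where
  "pow_adj G x y \<longleftrightarrow> x \<noteq> y \<and>
     ((\<exists>n::nat. y = x [^]\<^bsub>G\<^esub> n) \<or> (\<exists>n::nat. x = y [^]\<^bsub>G\<^esub> n))"

definition epow_adj :: "('a, 'b) monoid_scheme \<Rightarrow> 'a \<Rightarrow> 'a \<Rightarrow> bool" where
  "epow_adj G x y \<longleftrightarrow> x \<noteq> y \<and> cyclic_group (subgroup_generated G {x, y})"

end

theory Submission
  imports Defs "HOL-Algebra.Multiplicative_Group" "HOL-Number_Theory.Totient"
begin

lemma totient_bound:
  assumes "n > 0" "totient n \<le> k"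
  shows "n \<le> fact (k+1) ^ (k+1)"
proof -
  let ?B = "fact (k+1) ^ (k+1) :: nat"
  have Bpos: "?B > 0" by simp
  have "n dvd ?B"
  proof (rule multiplicity_le_imp_dvd)
    show "n \<noteq> 0" using assms by simp
    fix p :: nat assume p: "prime p"
    show "multiplicity p n \<le> multiplicity p ?B"
    proof (cases "p dvd n")
      case False then show ?thesis by (simp add: not_dvd_imp_multiplicity_0)
    next
      case True
      define a where "a = multiplicity p n"
      have a1: "a \<ge> 1" using True p assms
        by (metis \<open>n \<noteq> 0\<close> a_def less_one linorder_not_le
    prime_elem_multiplicity_eq_zero_iff prime_imp_prime_elem)
       
      have "p ^ a dvd n" by (simp add: a_def multiplicity_dvd)
      hence "totient (p^a) \<le> totient n" using totient_dvd_mono assms by blast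
      hence t: "p^(a-1) * (p-1) \<le> k" using totient_prime_power p a1 assms by simp
      have p2: "p \<ge> 2" using p prime_ge_2_nat by blast
      have pa: "p^(a-1) \<ge> 1" using p2 by simp
      have "p - 1 \<le> k" using t pa
        by (smt (verit, ccfv_threshold) comm_monoid_mult_class.mult_1
    diff_is_0_eq' diff_le_mono2 diff_mult_distrib diff_self_eq_0
    linorder_not_le zero_less_diff)
      hence pk: "p \<le> k+1" by simp
      have "p^(a-1) \<le> k" using t p2
        by (metis Nat.le_diff_conv2 One_nat_def add_gr_0 dec_less_imp_less_eq
    diff_Suc_1 dual_order.trans less_one mult.right_neutral mult_le_mono2
    one_add_one)
      moreover have "a - 1 < 2^(a-1)" by (rule less_exp)
      moreover have "(2::nat)^(a-1) \<le> p^(a-1)" using p2 by (simp add: power_mono)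
      ultimately have ak: "a \<le> k+1" by linarith
      have "p dvd fact (k+1)" by (rule dvd_fact) (use pk p2 in auto)
      hence "p^(k+1) dvd ?B" by (rule dvd_power_same)
      hence "p^a dvd ?B" using ak by (meson dvd_trans le_imp_power_dvd)
      thus "multiplicity p n \<le> multiplicity p ?B" unfolding a_def[symmetric]
        using Bpos by (metis not_gr_zero not_prime_unit p
    power_dvd_iff_le_multiplicity)
    qed
  qed
  thus ?thesis using dvd_imp_le Bpos by blast
qed

lemma clique_le:
  assumes "finite V" "is_clique V E S"
  shows "card S \<le> clique_number V E"
proof -
  have "{S. is_clique V E S} \<subseteq> Pow V" by (auto simp: is_clique_def)
  hence "finite {S. is_clique V E S}" using assms(1) finite_subset by blast
  thus ?thesis unfolding clique_number_def using assms(2) by (intro Max_ge) auto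
qed

lemma clique_ex:
  assumes "finite V"
  shows "\<exists>S. is_clique V E S \<and> card S = clique_number V E"
proof -
  have "{S. is_clique V E S} \<subseteq> Pow V" by (auto simp: is_clique_def)
  hence fin: "finite {S. is_clique V E S}" using assms(1) finite_subset by blast
  have "is_clique V E {}" by (simp add: is_clique_def)
  hence "clique_number V E \<in> card ` {S. is_clique V E S}"
    unfolding clique_number_def using fin by (intro Max_in) auto
  thus ?thesis by auto
qed

lemma (in group) pow_cong:
  assumes "x \<in> carrier G" "[m = k] (mod ord x)"
  shows "x [^] m = x [^] (k::nat)"
proof -
  have "[int k = int m] (mod int (ord x))" using cong_sym[OF assms(2)] by (simp add: cong_int_iff)
  hence "int (ord x) dvd (int k - int m)" by (simp add: cong_iff_dvd_diff)
  hence "x [^] (int m) = x [^] (int k)" using int_pow_eq[OF assms(1)] by blast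
  thus ?thesis by (simp add: int_pow_int)
qed

lemma (in group) totient_ord_le_pow_clique:
  assumes fin: "finite (carrier G)" and x: "x \<in> carrier G"
  shows "totient (ord x) \<le> clique_number (carrier G) (pow_adj G)"
proof -
  let ?n = "ord x"
  let ?S = "(\<lambda>i. x [^] i) ` totatives ?n"
  have inj: "inj_on (\<lambda>i. x [^] i) (totatives ?n)"
    using ord_inj'[OF x] by (rule inj_on_subset) (auto simp: in_totatives_iff)
  have card: "card ?S = totient ?n" by (simp add: card_image[OF inj] totient_def)
  have clique: "is_clique (carrier G) (pow_adj G) ?S"
    unfolding is_clique_def
  proof (intro conjI)
    show "?S \<subseteq> carrier G" using x by auto
    show "\<forall>a\<in>?S. \<forall>b\<in>?S. a \<noteq> b \<longrightarrow> pow_adj G a b"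
    proof (intro ballI impI)
    fix a b assume a: "a \<in> ?S" and b: "b \<in> ?S" and ab: "a \<noteq> b"
    then obtain i j where ij: "i \<in> totatives ?n" "j \<in> totatives ?n" "a = x [^] i" "b = x [^] j" by auto
    have "coprime i ?n" using ij by (simp add: in_totatives_iff)
    then obtain u where u: "[i * u = Suc 0] (mod ?n)" using cong_solve_coprime_nat by blast
    have "[i * u * j = Suc 0 * j] (mod ?n)" using u by (rule cong_scalar_right)
    hence "[i * (u * j) = j] (mod ?n)" by (simp add: mult.assoc)
    hence "x [^] (i * (u * j)) = x [^] j" by (rule pow_cong[OF x])
    hence "b = a [^] (u * j)" using ij x by (simp add: nat_pow_pow)
    thus "pow_adj G a b" unfolding pow_adj_def using ab by blast
    qed
  qed
  show ?thesis using clique_le[OF fin clique] card by simp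
qed

lemma (in group) same_ord_in_pow:
  assumes fin: "finite (carrier G)" and x: "x \<in> carrier G" and y: "y \<in> carrier G"
    and cyc: "cyclic_group (subgroup_generated G {x, y})" and eq: "ord x = ord y"
  shows "x \<in> (\<lambda>j. y [^] j) ` {..<ord y}"
proof -
  let ?H = "subgroup_generated G {x, y}"
  have gH: "group ?H" by (rule group_subgroup_generated)
  obtain g where g: "g \<in> carrier ?H" "subgroup_generated ?H {g} = ?H"
    using cyc unfolding cyclic_group_def by blast
  have cH: "carrier ?H \<subseteq> carrier G" by (rule carrier_subgroup_generated_subset)
  have finH: "finite (carrier ?H)" using fin cH finite_subset by blast
  have gG: "g \<in> carrier G" using g cH by blast
  have xyH: "x \<in> carrier ?H" "y \<in> carrier ?H"
    unfolding carrier_subgroup_generated by (rule generate.incl, use x y in blast)+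
  have "carrier ?H = carrier (subgroup_generated ?H {g})" using g(2) by simp
  also have "\<dots> = generate ?H {g}" using g(1) by (simp add: carrier_subgroup_generated)
  also have "\<dots> = {g [^]\<^bsub>?H\<^esub> k | k. k \<in> (UNIV::nat set)}"
    by (rule group.generate_pow_on_finite_carrier[OF gH finH g(1)])
  also have "\<dots> = {g [^] k | k. k \<in> (UNIV::nat set)}" by (simp add: pow_subgroup_generated)
  finally have Hpow: "carrier ?H = {g [^] k | k. k \<in> (UNIV::nat set)}" .
  from xyH(1) have "x \<in> {g [^] k | k. k \<in> (UNIV::nat set)}" unfolding Hpow .
  then obtain a where xa: "x = g [^] (a::nat)" by blast
  define m where "m = ord g"
  define d where "d = ord y"
  have m1: "m \<ge> 1" unfolding m_def by (rule ord_ge_1[OF fin gG])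
  have d1: "d \<ge> 1" unfolding d_def by (rule ord_ge_1[OF fin y])
  define T where "T = {u. \<exists>a::nat. u = g [^] a \<and> u [^] d = \<one>}"
  have T_sub: "T \<subseteq> (\<lambda>t. g [^] (m * t div d)) ` {..<d}"
  proof
    fix u assume "u \<in> T"
    then obtain a :: nat where ua: "u = g [^] a" "u [^] d = \<one>" unfolding T_def by blast
    let ?a = "a mod m"
    have "[a = ?a] (mod ord g)" unfolding m_def by simp
    hence ga: "g [^] a = g [^] ?a" by (rule pow_cong[OF gG])
    have "g [^] (a * d) = \<one>" using ua gG by (simp add: nat_pow_pow)
    hence "m dvd a * d" unfolding m_def using pow_eq_id[OF gG] by blast
    moreover have "[a * d = ?a * d] (mod m)" by (simp add: cong_scalar_right)
    ultimately have "m dvd ?a * d" using cong_dvd_iff by blast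
    then obtain t where t: "?a * d = m * t" by blast
    have "?a < m" using m1 by simp
    hence "?a * d < m * d" using d1 by simp
    hence "t < d" using t by simp
    moreover have "?a = m * t div d" using d1 by (simp add: t[symmetric])
    ultimately show "u \<in> (\<lambda>t. g [^] (m * t div d)) ` {..<d}" using ua ga by auto
  qed
  have finT: "finite T" using T_sub finite_subset by blast
  have cardT: "card T \<le> d"
    using card_mono[OF _ T_sub] card_image_le[of "{..<d}" "\<lambda>t. g [^] (m * t div d)"] by simp
  let ?Y = "(\<lambda>j. y [^] j) ` {..<d}"
  have YT: "?Y \<subseteq> T"
  proof
    fix u assume "u \<in> ?Y"
    then obtain j :: nat where j: "u = y [^] j" by blast
    from xyH(2) have "y \<in> {g [^] k | k. k \<in> (UNIV::nat set)}" unfolding Hpow .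
    then obtain b where yb: "y = g [^] (b::nat)" by blast
    have "u = g [^] (b * j)" using j yb gG by (simp add: nat_pow_pow)
    moreover have "u [^] d = \<one>" using j y pow_eq_id[OF y, of "j * d"] unfolding d_def
      by (simp add: nat_pow_pow)
    ultimately show "u \<in> T" unfolding T_def by blast
  qed
  have "inj_on (\<lambda>j. y [^] j) {0 .. ord y - 1}" by (rule ord_inj[OF y])
  moreover have "{0 .. ord y - 1} = {..<d}" using d1 unfolding d_def by auto
  ultimately have "card ?Y = d" by (simp add: card_image)
  hence "?Y = T" using card_seteq[OF finT YT] cardT by simp
  moreover have "x [^] d = \<one>" using pow_ord_eq_1[OF x] eq unfolding d_def by simp
  hence "x \<in> T" unfolding T_def using xa by blast
  ultimately show ?thesis unfolding d_def by blast
qed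

theorem theorem4p2:
  "\<exists>f :: nat \<Rightarrow> nat. \<forall>G :: ('a, 'b) monoid_scheme.
     group G \<and> finite (carrier G) \<longrightarrow>
     clique_number (carrier G) (epow_adj G) \<le> f (clique_number (carrier G) (pow_adj G))"
proof (rule exI[of _ "\<lambda>k. (fact (k+1) ^ (k+1)) * (fact (k+1) ^ (k+1) :: nat)"], intro allI impI)
  fix G :: "('a, 'b) monoid_scheme"
  assume GG: "group G \<and> finite (carrier G)"
  interpret group G using GG by blast
  have fin: "finite (carrier G)" using GG by blast
  define k where "k = clique_number (carrier G) (pow_adj G)"
  define M :: nat where "M = fact (k+1) ^ (k+1)"
  have ordM: "ord x \<le> M" "ord x \<ge> 1" if "x \<in> carrier G" for x
  proof -
    show "ord x \<ge> 1" by (rule ord_ge_1[OF fin that])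
    moreover have "totient (ord x) \<le> k" unfolding k_def by (rule totient_ord_le_pow_clique[OF fin that])
    ultimately show "ord x \<le> M" unfolding M_def by (intro totient_bound) auto
  qed
  obtain S where S: "is_clique (carrier G) (epow_adj G) S" "card S = clique_number (carrier G) (epow_adj G)"
    using clique_ex[OF fin] by blast
  have SG: "S \<subseteq> carrier G" using S by (simp add: is_clique_def)
  define F where "F d = {x \<in> S. ord x = d}" for d
  have SU: "S \<subseteq> (\<Union>d\<in>{1..M}. F d)"
  proof
    fix x assume "x \<in> S"
    hence "x \<in> F (ord x)" "ord x \<in> {1..M}" using SG ordM unfolding F_def by auto
    thus "x \<in> (\<Union>d\<in>{1..M}. F d)" by blast
  qed
  have FM: "card (F d) \<le> M" if d: "d \<in> {1..M}" for d
  proof (cases "F d = {}")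
    case True then show ?thesis by simp
  next
    case False
    then obtain y where y: "y \<in> F d" by blast
    have yG: "y \<in> carrier G" and yd: "ord y = d" using y SG unfolding F_def by auto
    have "F d \<subseteq> (\<lambda>j. y [^]\<^bsub>G\<^esub> j) ` {..<ord y}"
    proof
      fix x assume x: "x \<in> F d"
      have xG: "x \<in> carrier G" and xd: "ord x = d" using x SG unfolding F_def by auto
      have "cyclic_group (subgroup_generated G {x, y})"
      proof (cases "x = y")
        case True then show ?thesis using cyclic_group_generated by simp
      next
        case False
        have "x \<in> S" "y \<in> S" using x y unfolding F_def by auto
        then have "epow_adj G x y" using S(1) False unfolding is_clique_def by blast
        then show ?thesis unfolding epow_adj_def by blast
      qed
      then show "x \<in> (\<lambda>j. y [^]\<^bsub>G\<^esub> j) ` {..<ord y}"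
        using same_ord_in_pow[OF fin xG yG] xd yd by simp
    qed
    hence "card (F d) \<le> card ((\<lambda>j. y [^]\<^bsub>G\<^esub> j) ` {..<ord y})" by (intro card_mono) auto
    also have "\<dots> \<le> ord y" using card_image_le[of "{..<ord y}"] by simp
    finally show ?thesis using yd d by simp
  qed
  have "card S \<le> card (\<Union>d\<in>{1..M}. F d)"
  proof (rule card_mono[OF _ SU])
    have "(\<Union>d\<in>{1..M}. F d) \<subseteq> carrier G" using SG unfolding F_def by blast
    thus "finite (\<Union>d\<in>{1..M}. F d)" using fin finite_subset by blast
  qed
  also have "\<dots> \<le> (\<Sum>d\<in>{1..M}. card (F d))" by (rule card_UN_le) simp
  also have "\<dots> \<le> of_nat (card {1..M}) * M" by (rule sum_bounded_above) (use FM in blast)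
  also have "\<dots> = M * M" by simp
  finally have cS: "card S \<le> M * M" .
  show "clique_number (carrier G) (epow_adj G)
      \<le> (fact (clique_number (carrier G) (pow_adj G)+1) ^ (clique_number (carrier G) (pow_adj G)+1)) * (fact (clique_number (carrier G) (pow_adj G)+1) ^ (clique_number (carrier G) (pow_adj G)+1) :: nat)"
    using cS unfolding S(2) M_def k_def .
qed

end
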